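(* Let $r,\delta,n,h$ be positive integers and $\lambda$ an integer with $r\ge 2$, $n\geq (\lambda+1)(h+1)^2$, $\lambda\geq r-1$ and $h\geq\delta$. If $G\in \mathcal{K}_{n,\delta}^{\lambda_r^h}$ (with $\lambda^h_r=\lambda$), then $$n-(r-1)(h+1)-1<\rho(G)< n-(r-1)(h+1).$$
   Context: All graphs are finite and simple; $\rho(G)$ denotes the spectral radius of the adjacency matrix of $G$; $K_m$ is the complete graph on $m$ vertices, $\cup$ denotes disjoint union, $sK_m$ denotes $s$ disjoint copies of $K_m$. For integers $r\ge 2$, $h\ge 0$, the $h$-extra $r$-component edge-connectivity $\lambda^h_r(G)$ of a graph $G$ is the minimum size of an edge subset $F\subseteq E(G)$ such that $G-F$ is disconnected, has at least $r$ connected components, and every component of $G-F$ has at least $h+1$ vertices. $\mathcal{K}_{n,\delta}^{\lambda_r^h}$ denotes the set of graphs $G$ with $h$-extra $r$-component edge-connectivity $\lambda^h_r(G)=\lambda$ and minimum degree $\delta$ that are obtained from $K_{n-(r-1)(h+1)}\cup (r-2)K_{h+1}\cup K_h\cup K_1$ as follows: add $t$ edges between the vertex of $K_1$ and vertices of $K_h$, for some $1\leq t\leq \delta$; add $r-1$ edges joining a vertex of $K_{n-(r-1)(h+1)}$ to one vertex in each copy of $K_{h+1}$ and to one vertex of $K_h$; and then add $\lambda-r+1-\delta+t$ further edges between $K_{n-(r-1)(h+1)}$ and $(r-2)K_{h+1}\cup K_h\cup K_1$. *)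

theory Defs
  imports Main "Jordan_Normal_Form.Spectral_Radius"
begin

definition simple_graph :: "nat \<Rightarrow> nat set set \<Rightarrow> bool" where
  "simple_graph n E \<longleftrightarrow> (\<forall>e\<in>E. e \<subseteq> {0..<n} \<and> card e = 2)"

definition adj_mat :: "nat \<Rightarrow> nat set set \<Rightarrow> complex mat" where
  "adj_mat n E = mat n n (\<lambda>(i, j). if {i, j} \<in> E \<and> i \<noteq> j then 1 else 0)"

definition graph_spectral_radius :: "nat \<Rightarrow> nat set set \<Rightarrow> real" where
  "graph_spectral_radius n E = spectral_radius (adj_mat n E)"

definition degree :: "nat set set \<Rightarrow> nat \<Rightarrow> nat" where
  "degree E v = card {u. {u, v} \<in> E \<and> u \<noteq> v}"

definition min_degree :: "nat \<Rightarrow> nat set set \<Rightarrow> nat" where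
  "min_degree n E = Min (degree E ` {0..<n})"

definition reach :: "nat \<Rightarrow> nat set set \<Rightarrow> nat \<Rightarrow> nat \<Rightarrow> bool" where
  "reach n E = (\<lambda>x y. x \<in> {0..<n} \<and> y \<in> {0..<n} \<and> {x, y} \<in> E \<and> x \<noteq> y)\<^sup>*\<^sup>*"

definition components :: "nat \<Rightarrow> nat set set \<Rightarrow> nat set set" where
  "components n E = {C. \<exists>x\<in>{0..<n}. C = {y \<in> {0..<n}. reach n E x y}}"

text \<open>F is an h-extra r-component edge cut: G - F has at least r components
(hence is disconnected, as r \<ge> 2) and every component has at least h+1 vertices.\<close>

definition extra_r_cut :: "nat \<Rightarrow> nat set set \<Rightarrow> nat \<Rightarrow> nat \<Rightarrow> nat set set \<Rightarrow> bool" where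
  "extra_r_cut n E h r F \<longleftrightarrow> F \<subseteq> E \<and> card (components n (E - F)) \<ge> r
     \<and> (\<forall>C\<in>components n (E - F). card C \<ge> h + 1)"

definition extra_r_edge_conn_eq :: "nat \<Rightarrow> nat set set \<Rightarrow> nat \<Rightarrow> nat \<Rightarrow> nat \<Rightarrow> bool" where
  "extra_r_edge_conn_eq n E h r l \<longleftrightarrow>
     (\<exists>F. extra_r_cut n E h r F \<and> card F = l) \<and> (\<forall>F. extra_r_cut n E h r F \<longrightarrow> l \<le> card F)"

definition clique_edges :: "nat set \<Rightarrow> nat set set" where
  "clique_edges S = {{x, y} | x y. x \<in> S \<and> y \<in> S \<and> x \<noteq> y}"

text \<open>The class K^{lambda^h_r}_{n,delta}: graphs on {0..<n} (up to labelling) obtained from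
K_{n-(r-1)(h+1)} (on A) \<union> (r-2) K_{h+1} (on B 0, ..., B (r-3)) \<union> K_h (on C) \<union> K_1 (on {v})
by adding t edges between v and C (1 \<le> t \<le> delta), r-1 edges X from a vertex a of A to one vertex
of each B i and one vertex of C, and l-r+1-delta+t further edges Y between A and the rest;
moreover lambda^h_r(G) = l and the minimum degree is delta.\<close>

definition in_K_class :: "nat \<Rightarrow> nat \<Rightarrow> nat \<Rightarrow> nat \<Rightarrow> nat \<Rightarrow> nat set set \<Rightarrow> bool" where
  "in_K_class n \<delta> h r l E \<longleftrightarrow>
     simple_graph n E \<and> min_degree n E = \<delta> \<and> extra_r_edge_conn_eq n E h r l \<and>
     (\<exists>A B C v t a b c Ev X Y.
        \<comment> \<open>vertex partition\<close>
        A \<union> (\<Union>i<r-2. B i) \<union> C \<union> {v} = {0..<n} \<and>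
        card A = n - (r - 1) * (h + 1) \<and>
        (\<forall>i<r-2. card (B i) = h + 1) \<and> card C = h \<and>
        (\<forall>i<r-2. A \<inter> B i = {}) \<and> (\<forall>i<r-2. \<forall>j<r-2. i \<noteq> j \<longrightarrow> B i \<inter> B j = {}) \<and>
        (\<forall>i<r-2. B i \<inter> C = {}) \<and> A \<inter> C = {} \<and>
        v \<notin> A \<and> (\<forall>i<r-2. v \<notin> B i) \<and> v \<notin> C \<and>
        \<comment> \<open>t edges between v and C\<close>
        1 \<le> t \<and> t \<le> \<delta> \<and> Ev \<subseteq> {{v, x} | x. x \<in> C} \<and> card Ev = t \<and>
        \<comment> \<open>r-1 edges from a vertex a of A\<close>
        a \<in> A \<and> (\<forall>i<r-2. b i \<in> B i) \<and> c \<in> C \<and>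
        X = {{a, b i} | i. i < r - 2} \<union> {{a, c}} \<and>
        \<comment> \<open>further edges between A and the rest\<close>
        Y \<subseteq> {{x, y} | x y. x \<in> A \<and> y \<in> (\<Union>i<r-2. B i) \<union> C \<union> {v}} \<and> Y \<inter> X = {} \<and>
        int (card Y) = int l - int r + 1 - int \<delta> + int t \<and>
        E = clique_edges A \<union> (\<Union>i<r-2. clique_edges (B i)) \<union> clique_edges C \<union> Ev \<union> X \<union> Y)"

end

theory Submission
  imports Defs "HOL-Real_Asymp.Real_Asymp"
begin


definition adjr :: "nat set set \<Rightarrow> nat \<Rightarrow> nat \<Rightarrow> real" where
  "adjr E i j = (if {i, j} \<in> E \<and> i \<noteq> j then 1 else 0)"

lemma adjr_sym: "adjr E i j = adjr E j i"
  unfolding adjr_def by (auto simp: insert_commute)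

lemma adjr_nonneg: "adjr E i j \<ge> 0" unfolding adjr_def by auto

lemma adj_mat_carrier: "adj_mat n E \<in> carrier_mat n n" unfolding adj_mat_def by auto

lemma adj_mat_index: "i < n \<Longrightarrow> j < n \<Longrightarrow> adj_mat n E $$ (i,j) = complex_of_real (adjr E i j)"
  unfolding adj_mat_def adjr_def by auto

lemma mult_vec_index_sum: assumes "A \<in> carrier_mat n n" "v \<in> carrier_vec n" "i < n"
  shows "(A *\<^sub>v v) $ i = (\<Sum>j<n. A $$ (i,j) * v $ j)"
  using assms by (auto simp: scalar_prod_def lessThan_atLeast0 intro!: sum.cong)

lemma upper_gen:
  assumes n: "n > 0" and wpos: "\<And>i. i < n \<Longrightarrow> w i > 0"
    and row: "\<And>i. i < n \<Longrightarrow> (\<Sum>j<n. adjr E i j * w j) < s * w i"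
  shows "graph_spectral_radius n E < s"
proof -
  let ?M = "adj_mat n E"
  have M: "?M \<in> carrier_mat n n" by (rule adj_mat_carrier)
  from spectral_radius_mem_max(1)[OF M n] obtain mu where
    mu: "mu \<in> spectrum ?M" and eq: "spectral_radius ?M = norm mu" by auto
  from mu obtain v where ev: "eigenvector ?M v mu"
    unfolding spectrum_def eigenvalue_def by auto
  hence v: "v \<in> carrier_vec n" and v0: "v \<noteq> 0\<^sub>v n" and Mv: "?M *\<^sub>v v = mu \<cdot>\<^sub>v v"
    unfolding eigenvector_def using M by auto
  define y where "y j = norm (v $ j)" for j
  have ynn: "y j \<ge> 0" for j unfolding y_def by auto
  obtain j0 where j0: "j0 < n" "v $ j0 \<noteq> 0"
  proof -
    have "\<exists>j<n. v $ j \<noteq> 0"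
    proof (rule ccontr)
      assume "\<not> ?thesis"
      hence "v = 0\<^sub>v n" using v by (intro eq_vecI) auto
      with v0 show False by simp
    qed
    thus ?thesis using that by auto
  qed
  have yj0: "y j0 > 0" using j0 unfolding y_def by auto
  have ineq: "norm mu * y i \<le> (\<Sum>j<n. adjr E i j * y j)" if i: "i < n" for i
  proof -
    have "mu * v $ i = (\<Sum>j<n. ?M $$ (i,j) * v $ j)"
      using mult_vec_index_sum[OF M v i] Mv i v by auto
    also have "\<dots> = (\<Sum>j<n. complex_of_real (adjr E i j) * v $ j)"
      using i by (intro sum.cong) (auto simp: adj_mat_index)
    finally have "norm (mu * v $ i) = norm (\<Sum>j<n. complex_of_real (adjr E i j) * v $ j)" by simp
    also have "\<dots> \<le> (\<Sum>j<n. norm (complex_of_real (adjr E i j) * v $ j))" by (rule norm_sum)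
    also have "\<dots> = (\<Sum>j<n. adjr E i j * y j)"
      by (intro sum.cong) (auto simp: y_def norm_mult adjr_def)
    finally show ?thesis by (simp add: norm_mult y_def)
  qed
  have "norm mu * (\<Sum>i<n. w i * y i) = (\<Sum>i<n. w i * (norm mu * y i))"
    by (simp add: sum_distrib_left algebra_simps)
  also have "\<dots> \<le> (\<Sum>i<n. w i * (\<Sum>j<n. adjr E i j * y j))"
    using ineq wpos by (intro sum_mono mult_left_mono) (auto intro: less_imp_le)
  also have "\<dots> = (\<Sum>j<n. y j * (\<Sum>i<n. adjr E j i * w i))"
  proof -
    have "(\<Sum>i<n. w i * (\<Sum>j<n. adjr E i j * y j)) = (\<Sum>i<n. \<Sum>j<n. w i * adjr E i j * y j)"
      by (simp add: sum_distrib_left mult.assoc)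
    also have "\<dots> = (\<Sum>j<n. \<Sum>i<n. w i * adjr E i j * y j)" by (rule sum.swap)
    also have "\<dots> = (\<Sum>j<n. y j * (\<Sum>i<n. adjr E j i * w i))"
      by (simp add: sum_distrib_left adjr_sym mult.commute mult.left_commute)
    finally show ?thesis .
  qed
  also have "\<dots> < (\<Sum>j<n. y j * (s * w j))"
  proof (rule sum_strict_mono_ex1)
    show "\<forall>j\<in>{..<n}. y j * (\<Sum>i<n. adjr E j i * w i) \<le> y j * (s * w j)"
      using row ynn by (meson less_imp_le lessThan_iff mult_left_mono)
    show "\<exists>j\<in>{..<n}. y j * (\<Sum>i<n. adjr E j i * w i) < y j * (s * w j)"
      using row[OF j0(1)] yj0 j0 by (intro bexI[of _ j0]) auto
  qed auto
  also have "\<dots> = s * (\<Sum>i<n. w i * y i)"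
    by (simp add: sum_distrib_left algebra_simps)
  finally have "norm mu * (\<Sum>i<n. w i * y i) < s * (\<Sum>i<n. w i * y i)" .
  moreover have "(\<Sum>i<n. w i * y i) > 0"
  proof -
    have "(\<Sum>i<n. w i * y i) \<ge> w j0 * y j0"
      using wpos ynn j0 by (intro member_le_sum) (auto intro: mult_nonneg_nonneg less_imp_le)
    moreover have "w j0 * y j0 > 0" using wpos j0 yj0 by auto
    ultimately show ?thesis by linarith
  qed
  ultimately have "norm mu < s" by (simp add: mult_less_cancel_right)
  thus ?thesis unfolding graph_spectral_radius_def eq .
qed

lemma mult_mat_index_sum: assumes "A \<in> carrier_mat n n" "B \<in> carrier_mat n n" "i < n" "j < n"
  shows "(A * B) $$ (i,j) = (\<Sum>l<n. A $$ (i,l) * B $$ (l,j))"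
  using assms by (auto simp: scalar_prod_def lessThan_atLeast0 intro!: sum.cong)

lemma lower_gen:
  assumes t: "t > 0" and st: "s > t" and xnn: "\<And>i. i < n \<Longrightarrow> x i \<ge> 0"
    and a: "a < n" and xa: "x a > 0"
    and row: "\<And>i. i < n \<Longrightarrow> s * x i \<le> (\<Sum>j<n. adjr E i j * x j)"
  shows "t < graph_spectral_radius n E"
proof (rule ccontr)
  assume "\<not> ?thesis"
  hence rho: "spectral_radius (adj_mat n E) \<le> t" unfolding graph_spectral_radius_def by simp
  have n: "n > 0" using a by auto
  let ?M = "adj_mat n E"
  have M: "?M \<in> carrier_mat n n" by (rule adj_mat_carrier)
  define Br :: "real mat" where "Br = mat n n (\<lambda>(i,j). adjr E i j / t)"
  have Br: "Br \<in> carrier_mat n n" unfolding Br_def by auto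
  define B :: "complex mat" where "B = of_real_hom.mat_hom Br"
  have B: "B \<in> carrier_mat n n" unfolding B_def using Br by auto
  have MB: "?M $$ (i,j) = complex_of_real t * B $$ (i,j)" if "i < n" "j < n" for i j
    using that t by (simp add: B_def Br_def adj_mat_index)
  have sB: "spectral_radius B \<le> 1"
  proof -
    from spectral_radius_mem_max(1)[OF B n] obtain mu where
      mu: "mu \<in> spectrum B" and eq: "spectral_radius B = norm mu" by auto
    from mu obtain v where ev: "eigenvector B v mu"
      unfolding spectrum_def eigenvalue_def by auto
    hence v: "v \<in> carrier_vec n" and v0: "v \<noteq> 0\<^sub>v n" and Bv: "B *\<^sub>v v = mu \<cdot>\<^sub>v v"
      unfolding eigenvector_def using B by auto
    have "?M *\<^sub>v v = (complex_of_real t * mu) \<cdot>\<^sub>v v"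
    proof (rule eq_vecI)
      fix i assume "i < dim_vec ((complex_of_real t * mu) \<cdot>\<^sub>v v)"
      hence i: "i < n" using v by auto
      have "(?M *\<^sub>v v) $ i = (\<Sum>j<n. ?M $$ (i,j) * v $ j)" by (rule mult_vec_index_sum[OF M v i])
      also have "\<dots> = complex_of_real t * (\<Sum>j<n. B $$ (i,j) * v $ j)"
        using i by (simp add: MB sum_distrib_left mult.assoc)
      also have "(\<Sum>j<n. B $$ (i,j) * v $ j) = (B *\<^sub>v v) $ i" by (rule mult_vec_index_sum[OF B v i, symmetric])
      also have "\<dots> = mu * v $ i" using Bv i v by auto
      finally show "(?M *\<^sub>v v) $ i = ((complex_of_real t * mu) \<cdot>\<^sub>v v) $ i" using i v by simp
    qed (use M v in auto)
    hence "eigenvector ?M v (complex_of_real t * mu)" unfolding eigenvector_def using M v v0 by auto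
    hence "norm (complex_of_real t * mu) \<in> norm ` spectrum ?M"
      unfolding spectrum_def eigenvalue_def by auto
    from spectral_radius_mem_max(2)[OF M n this]
    have "t * norm mu \<le> spectral_radius ?M" using t by (simp add: norm_mult)
    hence "t * norm mu \<le> t" using rho by linarith
    hence "norm mu \<le> 1" using t by simp
    thus ?thesis using eq by simp
  qed
  from spectral_radius_jnf_norm_bound_le_1_upper_triangular[OF B sB]
  obtain c1 c2 where nb: "\<And>k. norm_bound (B ^\<^sub>m k) (c1 + c2 * of_nat k ^ (n - 1))" by auto
  have bound: "\<bar>(Br ^\<^sub>m k) $$ (i,j)\<bar> \<le> c1 + c2 * real k ^ (n - 1)" if "i < n" "j < n" for i j k
  proof -
    have "B ^\<^sub>m k = of_real_hom.mat_hom (Br ^\<^sub>m k)"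
      unfolding B_def by (rule of_real_hom.mat_hom_pow[OF Br, symmetric])
    hence "(B ^\<^sub>m k) $$ (i,j) = complex_of_real ((Br ^\<^sub>m k) $$ (i,j))" using that Br by simp
    moreover have "norm ((B ^\<^sub>m k) $$ (i,j)) \<le> c1 + c2 * real k ^ (n - 1)"
      using nb[of k] that B unfolding norm_bound_def by auto
    ultimately show ?thesis by simp
  qed
  have nonneg: "(Br ^\<^sub>m k) $$ (i,j) \<ge> 0" if "i < n" "j < n" for i j k
    using that
  proof (induction k arbitrary: i j)
    case 0 thus ?case using Br by auto
  next
    case (Suc k)
    have "(Br ^\<^sub>m Suc k) $$ (i,j) = (\<Sum>l<n. (Br ^\<^sub>m k) $$ (i,l) * Br $$ (l,j))"
      using mult_mat_index_sum[of "Br ^\<^sub>m k" n Br i j] Br Suc.prems by simp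
    also have "\<dots> \<ge> 0" using Suc.IH Suc.prems t
      by (intro sum_nonneg mult_nonneg_nonneg) (auto simp: Br_def adjr_nonneg)
    finally show ?case .
  qed
  define q where "q = s / t"
  have q1: "q > 1" unfolding q_def using st t by simp
  have step: "q * x l \<le> (\<Sum>j<n. Br $$ (l,j) * x j)" if "l < n" for l
  proof -
    have "(\<Sum>j<n. Br $$ (l,j) * x j) = (\<Sum>j<n. adjr E l j * x j) / t"
      using that by (simp add: Br_def sum_divide_distrib)
    moreover have "q * x l = s * x l / t" unfolding q_def by simp
    ultimately show ?thesis using row[OF that] t by (simp add: divide_right_mono)
  qed
  have grow: "q ^ k * x i \<le> (\<Sum>j<n. (Br ^\<^sub>m k) $$ (i,j) * x j)" if "i < n" for i k
    using that
  proof (induction k arbitrary: i)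
    case 0
    have "(\<Sum>j<n. (Br ^\<^sub>m 0) $$ (i,j) * x j) = (\<Sum>j<n. (if i = j then x j else 0))"
      using Br 0 by (intro sum.cong) auto
    also have "\<dots> = x i" using 0 by simp
    finally show ?case by simp
  next
    case (Suc k)
    have "(\<Sum>j<n. (Br ^\<^sub>m Suc k) $$ (i,j) * x j)
        = (\<Sum>j<n. (\<Sum>l<n. (Br ^\<^sub>m k) $$ (i,l) * Br $$ (l,j)) * x j)"
      using mult_mat_index_sum[of "Br ^\<^sub>m k" n Br i] Br Suc.prems by (intro sum.cong) auto
    also have "\<dots> = (\<Sum>j<n. \<Sum>l<n. (Br ^\<^sub>m k) $$ (i,l) * (Br $$ (l,j) * x j))"
      by (simp add: sum_distrib_right mult.assoc)
    also have "\<dots> = (\<Sum>l<n. \<Sum>j<n. (Br ^\<^sub>m k) $$ (i,l) * (Br $$ (l,j) * x j))"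
      by (rule sum.swap)
    also have "\<dots> = (\<Sum>l<n. (Br ^\<^sub>m k) $$ (i,l) * (\<Sum>j<n. Br $$ (l,j) * x j))"
      by (simp add: sum_distrib_left)
    also have "\<dots> \<ge> (\<Sum>l<n. (Br ^\<^sub>m k) $$ (i,l) * (q * x l))"
      using step nonneg Suc.prems by (intro sum_mono mult_left_mono) auto
    finally have "(\<Sum>l<n. (Br ^\<^sub>m k) $$ (i,l) * (q * x l)) \<le> (\<Sum>j<n. (Br ^\<^sub>m Suc k) $$ (i,j) * x j)" .
    moreover have "(\<Sum>l<n. (Br ^\<^sub>m k) $$ (i,l) * (q * x l)) = q * (\<Sum>l<n. (Br ^\<^sub>m k) $$ (i,l) * x l)"
      by (simp add: sum_distrib_left algebra_simps)
    moreover have "q * (q ^ k * x i) \<le> q * (\<Sum>l<n. (Br ^\<^sub>m k) $$ (i,l) * x l)"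
      using Suc.IH[OF Suc.prems] q1 by simp
    ultimately show ?case by simp
  qed
  define X where "X = (\<Sum>j<n. x j)"
  have XA: "x a \<le> X" unfolding X_def using a xnn by (intro member_le_sum) auto
  hence X0: "X > 0" using xa by linarith
  have key: "q ^ k * x a \<le> (c1 + c2 * real k ^ (n - 1)) * X" for k
  proof -
    have "q ^ k * x a \<le> (\<Sum>j<n. (Br ^\<^sub>m k) $$ (a,j) * x j)" by (rule grow[OF a])
    also have "\<dots> \<le> (\<Sum>j<n. (c1 + c2 * real k ^ (n - 1)) * x j)"
    proof (intro sum_mono)
      fix j assume "j \<in> {..<n}"
      hence j: "j < n" by simp
      have "(Br ^\<^sub>m k) $$ (a,j) \<le> c1 + c2 * real k ^ (n - 1)" using bound[OF a j, of k] by linarith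
      thus "(Br ^\<^sub>m k) $$ (a,j) * x j \<le> (c1 + c2 * real k ^ (n - 1)) * x j"
        using xnn[OF j] by (rule mult_right_mono)
    qed
    also have "\<dots> = (c1 + c2 * real k ^ (n - 1)) * X" unfolding X_def by (simp add: sum_distrib_left)
    finally show ?thesis .
  qed
  have lim: "(\<lambda>k. (c1 + c2 * real k ^ (n - 1)) / q ^ k) \<longlonglongrightarrow> 0"
    using q1 by real_asymp
  have "x a / X > 0" using xa X0 by simp
  from lim[THEN order_tendstoD(2), OF this] obtain k where
    k: "(c1 + c2 * real k ^ (n - 1)) / q ^ k < x a / X"
    by (auto simp: eventually_sequentially)
  have qk: "q ^ k > 0" using q1 by simp
  from k qk X0 have "(c1 + c2 * real k ^ (n - 1)) * X < x a * q ^ k"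
    by (simp add: field_simps)
  with key[of k] show False by (simp add: mult.commute)
qed



lemma clique_mem: "{i, j} \<in> clique_edges S \<Longrightarrow> i \<in> S \<and> j \<in> S"
  unfolding clique_edges_def by (auto simp: doubleton_eq_iff)

lemma clique_in: "i \<in> S \<Longrightarrow> j \<in> S \<Longrightarrow> i \<noteq> j \<Longrightarrow> {i, j} \<in> clique_edges S"
  unfolding clique_edges_def by blast

lemma sum_adj_le_card:
  assumes "finite S" "finite N" "\<And>j. j \<in> S \<Longrightarrow> adjr E i j \<noteq> 0 \<Longrightarrow> j \<in> N"
  shows "(\<Sum>j\<in>S. adjr E i j) \<le> real (card N)"
proof -
  have "(\<Sum>j\<in>S. adjr E i j) = (\<Sum>j\<in>S \<inter> N. adjr E i j)"
    using assms by (intro sum.mono_neutral_right) auto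
  also have "\<dots> \<le> (\<Sum>j\<in>S \<inter> N. 1)"
    by (intro sum_mono) (auto simp: adjr_def)
  also have "\<dots> = real (card (S \<inter> N))" by simp
  also have "\<dots> \<le> real (card N)" using assms by (simp add: card_mono)
  finally show ?thesis .
qed

lemma sum_clique_row:
  assumes "finite S" "i \<in> S" "\<And>j. j \<in> S \<Longrightarrow> j \<noteq> i \<Longrightarrow> adjr E i j = 1"
  shows "(\<Sum>j\<in>S. adjr E i j * g j) = (\<Sum>j\<in>S - {i}. g j)"
proof -
  have "(\<Sum>j\<in>S. adjr E i j * g j) = adjr E i i * g i + (\<Sum>j\<in>S - {i}. adjr E i j * g j)"
    using assms by (simp add: sum.remove)
  also have "adjr E i i = 0" by (simp add: adjr_def)
  also have "(\<Sum>j\<in>S - {i}. adjr E i j * g j) = (\<Sum>j\<in>S - {i}. g j)"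
    using assms by (intro sum.cong) auto
  finally show ?thesis by simp
qed



theorem lemma3p3:
  fixes r \<delta> n h l :: nat and E :: "nat set set"
  assumes "r \<ge> 2" and "\<delta> \<ge> 1" and "n \<ge> 1" and "h \<ge> 1"
    and "n \<ge> (l + 1) * (h + 1)^2" and "l \<ge> r - 1" and "h \<ge> \<delta>"
    and "in_K_class n \<delta> h r l E"
  shows "real n - real ((r - 1) * (h + 1)) - 1 < graph_spectral_radius n E
     \<and> graph_spectral_radius n E < real n - real ((r - 1) * (h + 1))"
proof -
  note r2 = assms(1) and h1 = assms(4) and nbig = assms(5) and lr = assms(6) and hd = assms(7)
  from assms(8) obtain A B C v t a b c Ev X Y where
    part: "A \<union> (\<Union>i<r-2. B i) \<union> C \<union> {v} = {0..<n}" and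
    cardA: "card A = n - (r - 1) * (h + 1)" and
    cardB: "\<forall>i<r-2. card (B i) = h + 1" and cardC: "card C = h" and
    AB: "\<forall>i<r-2. A \<inter> B i = {}" and BB: "\<forall>i<r-2. \<forall>j<r-2. i \<noteq> j \<longrightarrow> B i \<inter> B j = {}" and
    BC: "\<forall>i<r-2. B i \<inter> C = {}" and AC: "A \<inter> C = {}" and
    vA: "v \<notin> A" and vB: "\<forall>i<r-2. v \<notin> B i" and vC: "v \<notin> C" and
    t1: "1 \<le> t" and td: "t \<le> \<delta>" and Ev: "Ev \<subseteq> {{v, x} | x. x \<in> C}" and
    aA: "a \<in> A" and bB: "\<forall>i<r-2. b i \<in> B i" and cC: "c \<in> C" and
    Xdef: "X = {{a, b i} | i. i < r - 2} \<union> {{a, c}}" and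
    Ysub: "Y \<subseteq> {{x, y} | x y. x \<in> A \<and> y \<in> (\<Union>i<r-2. B i) \<union> C \<union> {v}}" and
    cardY: "int (card Y) = int l - int r + 1 - int \<delta> + int t" and
    Edef: "E = clique_edges A \<union> (\<Union>i<r-2. clique_edges (B i)) \<union> clique_edges C \<union> Ev \<union> X \<union> Y"
    unfolding in_K_class_def apply (elim conjE exE) apply (rule that) by assumption+
  define m where "m = n - (r - 1) * (h + 1)"
  define Out where "Out = {0..<n} - A"
  have Asub: "A \<subseteq> {0..<n}" using part by blast
  have finA: "finite A" using Asub finite_subset by blast
  have finOut: "finite Out" unfolding Out_def by simp
  have hn: "(r - 1) * (h + 1) \<le> n"
  proof -
    have "(r - 1) * (h + 1) \<le> l * (h + 1)" using lr by (rule mult_right_mono) simp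
    also have "\<dots> \<le> (l + 1) * (h + 1) * (h + 1)" by simp
    also have "\<dots> = (l + 1) * (h + 1)^2" by (simp only: power2_eq_square mult.assoc)
    finally show ?thesis using nbig by linarith
  qed
  have cardA': "card A = m" using cardA m_def by simp
  have cardOut: "card Out = (r - 1) * (h + 1)"
    unfolding Out_def using Asub finA hn cardA by (simp add: card_Diff_subset)
  have mreal: "real m = real n - real ((r - 1) * (h + 1))" unfolding m_def using hn by simp
  have mbig: "real m \<ge> (real l + 1) * (real h + 1)^2 - real l * (real h + 1)"
  proof -
    have "real (r - 1) \<le> real l" using lr by simp
    hence "real (r - 1) * (real h + 1) \<le> real l * (real h + 1)" by (rule mult_right_mono) simp
    hence "real ((r - 1) * (h + 1)) \<le> real l * (real h + 1)" by (simp only: of_nat_mult of_nat_add of_nat_1)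
    moreover have "real n \<ge> real ((l + 1) * (h + 1)^2)" using nbig by (simp only: of_nat_le_iff)
    hence "real n \<ge> (real l + 1) * (real h + 1)^2" by (simp add: algebra_simps)
    ultimately show ?thesis using mreal by linarith
  qed
  have outcases: "(\<exists>k<r-2. i \<in> B k) \<or> i \<in> C \<or> i = v" if "i \<in> Out" for i
    using that part unfolding Out_def by blast
  have inOut: "i \<in> Out" if "(\<exists>k<r-2. i \<in> B k) \<or> i \<in> C \<or> i = v" for i
    using that part AB AC vA unfolding Out_def by blast
  have eclass: "(i \<in> A \<and> j \<in> A) \<or> (\<exists>k<r-2. i \<in> B k \<and> j \<in> B k) \<or> (i \<in> C \<and> j \<in> C)
      \<or> (i = v \<and> j \<in> C) \<or> (j = v \<and> i \<in> C) \<or> {i, j} \<in> X \<union> Y" if "{i, j} \<in> E" for i j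
  proof -
    have "{i,j} \<in> clique_edges A \<or> (\<exists>k<r-2. {i,j} \<in> clique_edges (B k)) \<or> {i,j} \<in> clique_edges C
      \<or> {i,j} \<in> Ev \<or> {i,j} \<in> X \<union> Y" using that Edef by blast
    moreover have "(i = v \<and> j \<in> C) \<or> (j = v \<and> i \<in> C)" if "{i,j} \<in> Ev"
    proof -
      from that Ev obtain x where "{i,j} = {v,x}" "x \<in> C" by blast
      thus ?thesis by (auto simp: doubleton_eq_iff)
    qed
    ultimately show ?thesis using clique_mem by blast
  qed
  have xyclass: "\<exists>x y. e = {x,y} \<and> x \<in> A \<and> y \<in> Out" if "e \<in> X \<union> Y" for e
  proof -
    have "e \<in> X \<Longrightarrow> ?thesis"
    proof -
      assume "e \<in> X"
      then consider (1) k where "k < r - 2" "e = {a, b k}" | (2) "e = {a, c}" unfolding Xdef by blast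
      thus ?thesis
      proof cases
        case 1 thus ?thesis using aA bB inOut by blast
      next
        case 2 thus ?thesis using aA cC inOut by blast
      qed
    qed
    moreover have "e \<in> Y \<Longrightarrow> ?thesis" using Ysub inOut by blast
    ultimately show ?thesis using that by blast
  qed
  have XYsubE: "X \<union> Y \<subseteq> E" using Edef by blast
  have sg: "simple_graph n E" using assms(8) unfolding in_K_class_def by blast
  have Out_iff: "i \<in> Out \<longleftrightarrow> i < n \<and> i \<notin> A" for i unfolding Out_def by auto
  have split: "(\<Sum>j<n. f j) = sum f A + sum f Out" for f :: "nat \<Rightarrow> real"
  proof -
    have "{..<n} = A \<union> Out" using Asub unfolding Out_def by auto
    moreover have "A \<inter> Out = {}" unfolding Out_def by auto
    ultimately show ?thesis using finA finOut by (simp add: sum.union_disjoint)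
  qed
  have adjA: "adjr E i j = 1" if "i \<in> A" "j \<in> A" "i \<noteq> j" for i j
    using clique_in[OF that] Edef unfolding adjr_def using that by auto
  have acE: "{a, c} \<in> E" using Xdef Edef by blast
  have ac: "a \<noteq> c" using aA cC AC by blast
  have adjac: "adjr E a c = 1" using acE ac unfolding adjr_def by auto
  have adjca: "adjr E c a = 1" using adjac adjr_sym by metis
  have cOut: "c \<in> Out" using inOut cC by blast
  have an: "a < n" using aA Asub by auto
  have cn: "c < n" using cOut Out_iff by auto
  have adj_nz: "{i, j} \<in> E \<and> i \<noteq> j" if "adjr E i j \<noteq> 0" for i j
    using that unfolding adjr_def by (auto split: if_splits)
  have outout: "(\<exists>k<r-2. i \<in> B k \<and> j \<in> B k) \<or> (i \<in> C \<and> j \<in> C) \<or> (i = v \<and> j \<in> C) \<or> (j = v \<and> i \<in> C)"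
    if "i \<in> Out" "j \<in> Out" "{i, j} \<in> E" for i j
  proof -
    have "{i, j} \<notin> X \<union> Y"
    proof
      assume "{i, j} \<in> X \<union> Y"
      from xyclass[OF this] obtain x y where "{i,j} = {x,y}" "x \<in> A" by blast
      hence "x = i \<or> x = j" by (auto simp: doubleton_eq_iff)
      with \<open>x \<in> A\<close> that(1,2) Out_iff show False by blast
    qed
    with eclass[OF that(3)] that(1,2) Out_iff show ?thesis by blast
  qed
  have nbr: "(\<Sum>j\<in>Out. adjr E i j) \<le> real h" if iO: "i \<in> Out" for i
  proof -
    obtain N where N: "finite N" "card N \<le> h" "\<And>j. j \<in> Out \<Longrightarrow> adjr E i j \<noteq> 0 \<Longrightarrow> j \<in> N"
    proof -
      from outcases[OF iO] consider (B) k where "k < r - 2" "i \<in> B k" | (C) "i \<in> C" | (V) "i = v" by blast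
      thus ?thesis
      proof cases
        case B
        have fB: "finite (B k)" using cardB B(1) by (metis add_is_0 card.infinite one_neq_zero)
        have "card (B k - {i}) = h" using cardB B fB by simp
        moreover have "j \<in> B k - {i}" if "j \<in> Out" "adjr E i j \<noteq> 0" for j
        proof -
          from adj_nz[OF that(2)] have e: "{i,j} \<in> E" "i \<noteq> j" by auto
          from outout[OF iO that(1) e(1)] consider (1) k' where "k' < r-2" "i \<in> B k'" "j \<in> B k'"
            | (2) "i \<in> C" | (3) "i = v" by blast
          thus ?thesis
          proof cases
            case 1
            have "k' = k" using BB 1 B by blast
            thus ?thesis using 1 e by auto
          next
            case 2 thus ?thesis using BC B by blast
          next
            case 3 thus ?thesis using vB B by blast
          qed
        qed
        ultimately show ?thesis using that[of "B k - {i}"] fB by auto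
      next
        case C
        have fC: "finite C" using cardC h1 by (metis card.infinite not_one_le_zero)
        have "card (insert v (C - {i})) \<le> card (C - {i}) + 1" by (simp add: card_insert_le_m1)
        also have "card (C - {i}) = h - 1" using cardC C fC by simp
        finally have "card (insert v (C - {i})) \<le> h" using h1 by simp
        moreover have "j \<in> insert v (C - {i})" if "j \<in> Out" "adjr E i j \<noteq> 0" for j
        proof -
          from adj_nz[OF that(2)] have e: "{i,j} \<in> E" "i \<noteq> j" by auto
          from outout[OF iO that(1) e(1)] consider (1) k' where "k' < r-2" "i \<in> B k'"
            | (2) "i \<in> C" "j \<in> C" | (3) "i = v" | (4) "j = v" by blast
          thus ?thesis
          proof cases
            case 1 thus ?thesis using BC C by blast
          next
            case 2 thus ?thesis using e by auto
          next
            case 3 thus ?thesis using vC C by blast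
          next
            case 4 thus ?thesis by auto
          qed
        qed
        ultimately show ?thesis using that[of "insert v (C - {i})"] fC by auto
      next
        case V
        have fC: "finite C" using cardC h1 by (metis card.infinite not_one_le_zero)
        moreover have "j \<in> C" if "j \<in> Out" "adjr E i j \<noteq> 0" for j
        proof -
          from adj_nz[OF that(2)] have e: "{i,j} \<in> E" "i \<noteq> j" by auto
          from outout[OF iO that(1) e(1)] consider (1) k' where "k' < r-2" "i \<in> B k'"
            | (2) "i \<in> C" | (3) "j \<in> C" | (4) "j = v" by blast
          thus ?thesis
          proof cases
            case 1 thus ?thesis using vB V by blast
          next
            case 2 thus ?thesis using vC V by blast
          next
            case 3 thus ?thesis .
          next
            case 4 thus ?thesis using V e by auto
          qed
        qed
        ultimately show ?thesis using that[of C] cardC by auto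
      qed
    qed
    have "(\<Sum>j\<in>Out. adjr E i j) \<le> real (card N)" by (rule sum_adj_le_card[OF finOut N(1) N(3)])
    also have "\<dots> \<le> real h" using N(2) by simp
    finally show ?thesis .
  qed
  have cross: "(\<Sum>u\<in>Out. \<Sum>z\<in>A. adjr E u z) \<le> real l"
  proof -
    define P where "P = {p \<in> Out \<times> A. {fst p, snd p} \<in> E}"
    have "(\<Sum>u\<in>Out. \<Sum>z\<in>A. adjr E u z) = (\<Sum>p\<in>Out \<times> A. adjr E (fst p) (snd p))"
      by (simp add: sum.cartesian_product case_prod_beta)
    also have "\<dots> = (\<Sum>p\<in>Out \<times> A. if {fst p, snd p} \<in> E then 1 else 0)"
      by (intro sum.cong) (auto simp: adjr_def Out_iff)
    also have "\<dots> = (\<Sum>p\<in>P. 1)" unfolding P_def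
      by (rule sum.inter_filter[symmetric]) (simp add: finOut finA)
    also have "\<dots> = real (card P)" by simp
    finally have eq: "(\<Sum>u\<in>Out. \<Sum>z\<in>A. adjr E u z) = real (card P)" .
    have finXY: "finite (X \<union> Y)"
    proof (rule finite_subset)
      show "X \<union> Y \<subseteq> Pow {0..<n}" using XYsubE sg unfolding simple_graph_def by blast
    qed simp
    have "card P \<le> card (X \<union> Y)"
    proof (rule card_inj_on_le[of "\<lambda>p. {fst p, snd p}"])
      show "inj_on (\<lambda>p. {fst p, snd p}) P"
      proof (rule inj_onI)
        fix p q assume "p \<in> P" "q \<in> P" "{fst p, snd p} = {fst q, snd q}"
        thus "p = q" unfolding P_def by (auto simp: doubleton_eq_iff Out_iff prod_eq_iff)
      qed
      show "(\<lambda>p. {fst p, snd p}) ` P \<subseteq> X \<union> Y"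
      proof
        fix e assume "e \<in> (\<lambda>p. {fst p, snd p}) ` P"
        then obtain u z where uz: "u \<in> Out" "z \<in> A" "{u, z} \<in> E" "e = {u, z}" unfolding P_def by auto
        from eclass[OF uz(3)] uz(1,2) Out_iff AB AC vA show "e \<in> X \<union> Y" using uz(4) by blast
      qed
    qed (rule finXY)
    also have "\<dots> \<le> card X + card Y" by (rule card_Un_le)
    finally have cP: "card P \<le> card X + card Y" .
    have cX: "card X \<le> r - 1"
    proof -
      have Xe: "X = (\<lambda>i. {a, b i}) ` {..<r-2} \<union> {{a, c}}" unfolding Xdef by auto
      have "card X \<le> card ((\<lambda>i. {a, b i}) ` {..<r-2}) + card {{a,c}}" unfolding Xe by (rule card_Un_le)
      also have "card ((\<lambda>i. {a, b i}) ` {..<r-2}) \<le> r - 2" using card_image_le[of "{..<r-2}"] by simp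
      finally show ?thesis using r2 by simp
    qed
    have cY: "card Y + (r - 1) \<le> l"
    proof -
      have "int t \<le> int \<delta>" using td by simp
      hence "int (card Y) + int r - 1 \<le> int l" using cardY by linarith
      thus ?thesis using r2 by linarith
    qed
    have "card P \<le> l" using cP cX cY by linarith
    thus ?thesis using eq by simp
  qed
  define L where "L = real l"
  define H where "H = real h"
  have H1: "H \<ge> 1" using h1 unfolding H_def by simp
  have L1: "L \<ge> 1" using lr r2 unfolding L_def by simp
  have mexp: "real m \<ge> L*(H*H) + L*H + H*H + 2*H + 1"
  proof -
    have "(L+1)*(H+1)^2 - L*(H+1) = L*(H*H) + L*H + H*H + 2*H + 1"
      by (simp add: power2_eq_square algebra_simps)
    thus ?thesis using mbig unfolding L_def H_def by linarith
  qed
  have HH: "H*H \<ge> 1" using mult_mono[OF H1 H1] H1 by simp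
  have LHH: "L*(H*H) \<ge> L" using mult_left_mono[OF HH, of L] L1 by simp
  have LH: "L*H \<ge> L" using mult_left_mono[OF H1, of L] L1 by simp
  have m2l: "2 * L < real m" using mexp LHH LH H1 HH by linarith
  have mhl: "H * (L * (H + 1) + 1) < real m" using mexp HH H1 by (simp add: algebra_simps)
  have mpos: "real m > 0" using m2l L1 by linarith
  define cc where "cc = 1 / (H + 1)"
  have ccpos: "cc > 0" unfolding cc_def using H1 by simp
  define d where "d u = (\<Sum>z\<in>A. adjr E u z)" for u
  have dnn: "d u \<ge> 0" for u unfolding d_def by (intro sum_nonneg) (simp add: adjr_nonneg)
  have Dsum: "(\<Sum>u\<in>Out. d u) \<le> L" using cross unfolding d_def L_def .
  have dle: "d u \<le> L" if "u \<in> Out" for u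
  proof -
    have "d u \<le> (\<Sum>u\<in>Out. d u)" using that finOut dnn by (intro member_le_sum) auto
    thus ?thesis using Dsum by linarith
  qed
  have Occ: "real (card Out) * cc = real (r - 1)"
    unfolding cardOut cc_def H_def using H1 by (simp add: field_simps)
  have rL: "real (r - 1) \<le> L" using lr unfolding L_def by simp
  define w where "w i = (if i \<in> A then 1 else (d i + cc) / real m)" for i
  have wpos: "w i > 0" for i unfolding w_def using dnn[of i] ccpos mpos by auto
  have upper: "graph_spectral_radius n E < real m"
  proof (rule upper_gen[of n w])
    show "n > 0" using an by simp
    show "w i > 0" for i by (rule wpos)
    fix i assume i: "i < n"
    show "(\<Sum>j<n. adjr E i j * w j) < real m * w i"
    proof (cases "i \<in> A")
      case True
      have sA: "(\<Sum>j\<in>A. adjr E i j * w j) = real m - 1"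
      proof -
        have "(\<Sum>j\<in>A. adjr E i j * w j) = (\<Sum>j\<in>A - {i}. w j)"
          using True adjA finA by (intro sum_clique_row) auto
        also have "\<dots> = (\<Sum>j\<in>A - {i}. 1)" by (intro sum.cong) (auto simp: w_def)
        also have "\<dots> = real m - 1" using True finA cardA' mpos by (simp add: card_Diff_singleton)
        finally show ?thesis .
      qed
      have "(\<Sum>j\<in>Out. adjr E i j * w j) \<le> (\<Sum>j\<in>Out. w j)"
        using wpos by (intro sum_mono) (auto simp: adjr_def less_imp_le)
      also have "\<dots> = (\<Sum>j\<in>Out. (d j + cc) / real m)" by (intro sum.cong) (auto simp: w_def Out_iff)
      also have "\<dots> = ((\<Sum>j\<in>Out. d j) + real (card Out) * cc) / real m"
        by (simp add: sum_divide_distrib[symmetric] sum.distrib)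
      also have "\<dots> \<le> (2 * L) / real m" using Dsum Occ rL mpos by (intro divide_right_mono) auto
      also have "\<dots> < 1" using m2l mpos by simp
      finally have "(\<Sum>j\<in>Out. adjr E i j * w j) < 1" .
      thus ?thesis using split sA True by (simp add: w_def)
    next
      case False
      hence iO: "i \<in> Out" using i Out_iff by auto
      have sA: "(\<Sum>j\<in>A. adjr E i j * w j) = d i" unfolding d_def by (intro sum.cong) (auto simp: w_def)
      have "(\<Sum>j\<in>Out. adjr E i j * w j) \<le> (\<Sum>j\<in>Out. adjr E i j * ((L + cc) / real m))"
      proof (intro sum_mono mult_left_mono)
        fix j assume "j \<in> Out"
        thus "w j \<le> (L + cc) / real m" using dle[of j] mpos by (auto simp: w_def Out_iff divide_right_mono)
      qed (simp add: adjr_nonneg)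
      also have "\<dots> = (\<Sum>j\<in>Out. adjr E i j) * ((L + cc) / real m)" by (rule sum_distrib_right[symmetric])
      also have "\<dots> \<le> H * ((L + cc) / real m)"
        using nbr[OF iO] L1 ccpos mpos unfolding H_def by (intro mult_right_mono) auto
      also have "\<dots> < cc"
      proof -
        have "H * (L + cc) * (H + 1) = H * (L * (H + 1) + 1)" unfolding cc_def using H1 by (simp add: field_simps)
        also have "\<dots> < real m" by (rule mhl)
        also have "real m = cc * real m * (H + 1)" unfolding cc_def using H1 by (simp add: field_simps)
        finally have "H * (L + cc) < cc * real m" using H1 by (simp add: mult_less_cancel_right)
        thus ?thesis using mpos by (simp add: field_simps)
      qed
      finally have "(\<Sum>j\<in>Out. adjr E i j * w j) < cc" .
      moreover have "real m * w i = d i + cc" using False mpos by (simp add: w_def)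
      ultimately show ?thesis using split sA by simp
    qed
  qed
  define M where "M = real m"
  have M2: "M > 2" using m2l L1 unfolding M_def by linarith
  define eps where "eps = 1 / M"
  define al where "al = 1 / (2 * M^2)"
  have alpos: "al > 0" unfolding al_def using M2 by simp
  have al_le: "al \<le> 1 / (2 * M)"
  proof -
    have "2 * M \<le> 2 * M^2" using M2 by (simp add: power2_eq_square)
    thus ?thesis unfolding al_def using M2 by (intro divide_left_mono) auto
  qed
  have "1 / (2 * M) \<le> 1" using M2 by simp
  hence al1: "al \<le> 1" using al_le by linarith
  have alM: "al * M = 1 / (2 * M)" unfolding al_def using M2 by (simp add: field_simps power2_eq_square)
  have num1: "(M - 1 + al) * (1 + al) \<le> M - 1 + eps"
  proof -
    have "(M - 1 + al) * (1 + al) = M - 1 + al * M + al * al" by (simp add: algebra_simps)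
    also have "al * al \<le> al" using al1 alpos by (simp add: mult_le_cancel_left1)
    hence "M - 1 + al * M + al * al \<le> M - 1 + 1/(2*M) + 1/(2*M)" using alM al_le by linarith
    also have "\<dots> = M - 1 + eps" unfolding eps_def using M2 by (simp add: field_simps)
    finally show ?thesis
      using \<open>M - 1 + al * M + al * al \<le> M - 1 + 1/(2*M) + 1/(2*M)\<close> by linarith
  qed
  have num2: "(M - 1 + al) * eps \<le> 1 + al"
  proof -
    have "(M - 1 + al) * eps = (M - 1 + al) / M" unfolding eps_def by simp
    also have "\<dots> \<le> 1" using M2 al1 by (simp add: field_simps)
    finally show ?thesis using alpos by linarith
  qed
  define x where "x i = (if i = a then 1 + al else if i \<in> A then 1 else if i = c then eps else 0)" for i
  have xnn: "x i \<ge> 0" for i unfolding x_def eps_def using alpos M2 by auto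
  have xA: "x j = 1 + (if j = a then al else 0)" if "j \<in> A" for j using that unfolding x_def by auto
  have xc: "x c = eps" unfolding x_def using ac cC AC by auto
  have termnn: "adjr E i j * x j \<ge> 0" for i j using adjr_nonneg xnn by simp
  have lower: "M - 1 < graph_spectral_radius n E"
  proof (rule lower_gen[of "M - 1" "M - 1 + al" n x a])
    show "M - 1 > 0" "M - 1 + al > M - 1" using M2 alpos by auto
    show "x i \<ge> 0" for i by (rule xnn)
    show "a < n" by (rule an)
    show "x a > 0" unfolding x_def using alpos by simp
    fix i assume i: "i < n"
    have sAi: "(\<Sum>j\<in>A. adjr E i j * x j) = (\<Sum>j\<in>A - {i}. x j)" if "i \<in> A"
      using that adjA finA by (intro sum_clique_row) auto
    have cardAi: "real (card (A - {i})) = M - 1" if "i \<in> A"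
      using that finA cardA' M2 unfolding M_def by (simp add: card_Diff_singleton)
    have Onn: "(\<Sum>j\<in>Out. adjr E i j * x j) \<ge> 0" using termnn by (simp add: sum_nonneg)
    consider (a) "i = a" | (A) "i \<in> A" "i \<noteq> a" | (c) "i = c" | (o) "i \<noteq> a" "i \<notin> A" "i \<noteq> c" by blast
    thus "(M - 1 + al) * x i \<le> (\<Sum>j<n. adjr E i j * x j)"
    proof cases
      case a
      have "(\<Sum>j\<in>A - {a}. x j) = (\<Sum>j\<in>A - {a}. 1)" by (intro sum.cong) (auto simp: x_def)
      hence s1: "(\<Sum>j\<in>A. adjr E i j * x j) = M - 1" using sAi[of] a aA cardAi by simp
      have "adjr E i c * x c \<le> (\<Sum>j\<in>Out. adjr E i j * x j)"
        using cOut finOut termnn by (intro member_le_sum) auto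
      hence "eps \<le> (\<Sum>j\<in>Out. adjr E i j * x j)" using a adjac xc by simp
      hence "M - 1 + eps \<le> (\<Sum>j<n. adjr E i j * x j)" using split s1 by simp
      moreover have "(M - 1 + al) * x i = (M - 1 + al) * (1 + al)" using a by (simp add: x_def)
      ultimately show ?thesis using num1 by linarith
    next
      case A
      have "(\<Sum>j\<in>A - {i}. x j) = (\<Sum>j\<in>A - {i}. 1 + (if j = a then al else 0))"
        by (intro sum.cong) (auto simp: xA)
      also have "\<dots> = real (card (A - {i})) + al" using finA aA A by (simp add: sum.distrib)
      finally have "(\<Sum>j\<in>A. adjr E i j * x j) = M - 1 + al" using sAi A cardAi by simp
      hence "M - 1 + al \<le> (\<Sum>j<n. adjr E i j * x j)" using split Onn by simp
      moreover have "x i = 1" using A by (simp add: x_def)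
      ultimately show ?thesis by simp
    next
      case c
      have "adjr E i a * x a \<le> (\<Sum>j<n. adjr E i j * x j)"
        using an termnn by (intro member_le_sum) auto
      hence "1 + al \<le> (\<Sum>j<n. adjr E i j * x j)" using c adjca by (simp add: x_def)
      moreover have "x i = eps" using c xc by simp
      ultimately show ?thesis using num2 by simp
    next
      case o
      hence "x i = 0" by (simp add: x_def)
      thus ?thesis using termnn by (simp add: sum_nonneg)
    qed
  qed
  show ?thesis using upper lower mreal unfolding M_def by linarith
qed

end
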